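(* Let $\xi_m>0$ and $0<\mu\le\xi_m$, and define for $\tau>0$ $$f(\mu,\tau)=2\tau\ln\frac{\cosh(\xi_m/2\tau)}{\cosh(\mu/2\tau)}+\mu\int_0^{\mu}\tanh\Big(\frac{\xi}{2\tau}\Big)\frac{d\xi}{\xi}.$$ Then $\partial f/\partial\tau<0$, $\partial f/\partial\mu>0$, $\lim_{\tau\to0^+}f(\mu,\tau)=\infty$ and $\lim_{\tau\to\infty}f(\mu,\tau)=0$. Consequently, for every $\lambda>0$ the equation $\xi_m/\lambda=f(\mu,\tau)$ has a unique positive solution $\tau=T_c(\mu,\lambda)$. *)

theory Defs
  imports "HOL-Analysis.Analysis"
begin

text \<open>The integral is the Henstock-Kurzweil integral over [0, mu]; the integrand
  tanh(xi/(2 tau))/xi is bounded and continuous on (0, mu] (its value at the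
  single point 0 is irrelevant).\<close>
definition gapf :: "real \<Rightarrow> real \<Rightarrow> real \<Rightarrow> real" where
  "gapf xim \<mu> \<tau> =
     2 * \<tau> * ln (cosh (xim / (2 * \<tau>)) / cosh (\<mu> / (2 * \<tau>)))
     + \<mu> * integral {0..\<mu>} (\<lambda>\<xi>. tanh (\<xi> / (2 * \<tau>)) / \<xi>)"

end

theory Submission
  imports Defs "HOL-Real_Asymp.Real_Asymp"
begin

definition g0 :: "real \<Rightarrow> real" where "g0 u = (if u = 0 then 1 else tanh u / u)"
definition G0 :: "real \<Rightarrow> real" where "G0 x = integral {-1..x} g0 - integral {-1..0} g0"

lemma isCont_g0: "isCont g0 x"
proof (cases "x = 0")
  case True
  have "((\<lambda>u. tanh u) has_real_derivative 1) (at 0)"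
    by (auto intro!: derivative_eq_intros)
  then have "((\<lambda>h::real. tanh h / h) \<longlongrightarrow> 1) (at 0)"
    using DERIV_def[THEN iffD1] by fastforce
  moreover have "eventually (\<lambda>u. tanh u / u = g0 u) (at 0)"
    by (simp add: eventually_at_filter g0_def)
  ultimately have "(g0 \<longlongrightarrow> 1) (at 0)" by (rule tendsto_cong[THEN iffD1, rotated])
  then show ?thesis using True by (simp add: isCont_def g0_def)
next
  case False
  have ev: "eventually (\<lambda>u. g0 u = tanh u / u) (nhds x)"
  proof -
    have "eventually (\<lambda>u. u \<in> -{0}) (nhds x)"
      using False by (intro eventually_nhds_in_open) auto
    then show ?thesis by eventually_elim (simp add: g0_def)
  qed
  have "isCont (\<lambda>u. tanh u / u) x"
    using False by (intro continuous_intros) auto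
  then show ?thesis using isCont_cong[OF ev] by simp
qed

lemma G0_deriv: assumes "x > -1" shows "(G0 has_real_derivative g0 x) (at x)"
proof -
  have c: "continuous_on {-1..x+1} g0"
    by (intro continuous_at_imp_continuous_on ballI isCont_g0)
  have "((\<lambda>y. integral {-1..y} g0) has_real_derivative g0 x) (at x within {-1..x+1})"
    using assms by (intro integral_has_real_derivative c) auto
  moreover have "at x within {-1..x+1} = at x"
    using assms by (intro at_within_interior) auto
  ultimately have "((\<lambda>y. integral {-1..y} g0) has_real_derivative g0 x) (at x)" by simp
  then have "((\<lambda>y. integral {-1..y} g0 - integral {-1..0} g0) has_real_derivative g0 x - 0) (at x)"
    by (intro DERIV_diff DERIV_const)
  then show ?thesis unfolding G0_def[abs_def] by simp
qed

lemma G0_0: "G0 0 = 0" by (simp add: G0_def)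

lemma tanh_le: assumes "(x::real) \<ge> 0" shows "tanh x \<le> x"
proof -
  have "(\<lambda>x. x - tanh x) 0 \<le> (\<lambda>x. x - tanh x) x"
  proof (rule DERIV_nonneg_imp_nondecreasing[OF assms])
    fix y :: real
    show "\<exists>d. ((\<lambda>x. x - tanh x) has_real_derivative d) (at y) \<and> d \<ge> 0"
      by (rule exI[of _ "1 - (1 - tanh y ^ 2)"]) (auto intro!: derivative_eq_intros)
  qed
  then show ?thesis by simp
qed

lemma g0_pos: "g0 u > 0"
  by (cases "u = 0") (auto simp: g0_def zero_less_divide_iff not_less_iff_gr_or_eq)

lemma g0_le1: assumes "u \<ge> 0" shows "g0 u \<le> 1"
  using tanh_le[OF assms] assms by (auto simp: g0_def)

lemma phi_neg: assumes "(x::real) > 0" shows "ln (cosh x) < x * tanh x"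
proof -
  let ?f = "\<lambda>x::real. ln (cosh x) - x * tanh x"
  have "?f 0 > ?f x"
  proof (rule DERIV_neg_imp_decreasing_open[OF assms])
    fix y :: real assume y: "0 < y" "y < x"
    have "(?f has_real_derivative (sinh y / cosh y - (tanh y + y * (1 - tanh y ^ 2)))) (at y)"
      by (auto intro!: derivative_eq_intros)
    moreover have "sinh y / cosh y - (tanh y + y * (1 - tanh y ^ 2)) < 0"
    proof -
      have "tanh y ^ 2 < 1" using tanh_real_lt_1[of y] tanh_real_gt_neg1[of y]
        by (simp add: abs_square_less_1)
      then show ?thesis using y by (simp add: tanh_def)
    qed
    ultimately show "\<exists>d. (?f has_real_derivative d) (at y) \<and> d < 0" by blast
  next
    show "continuous_on {0..x} ?f"
      by (intro continuous_intros) auto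
  qed
  then show ?thesis by simp
qed

lemma lncosh_pos: assumes "(x::real) > 0" shows "ln (cosh x) > 0"
proof -
  have "cosh x \<ge> 1" by (rule cosh_real_ge_1)
  moreover have "cosh x \<noteq> 1" using assms by simp
  ultimately have "cosh x > 1" by (metis cosh_real_one_iff le_less)
  then show ?thesis by simp
qed

lemma int_eq:
  assumes t: "\<tau> > 0" and m: "m \<ge> 0"
  shows "integral {0..m} (\<lambda>\<xi>. tanh (\<xi> / (2 * \<tau>)) / \<xi>) = G0 (m / (2 * \<tau>))"
proof -
  have d: "((\<lambda>\<xi>. G0 (\<xi> / (2 * \<tau>))) has_vector_derivative g0 (x / (2 * \<tau>)) / (2 * \<tau>)) (at x within {0..m})"
    if "x \<in> {0..m}" for x
  proof -
    have "x / (2 * \<tau>) > -1" using that t by (auto intro: less_le_trans[of _ 0] simp: divide_nonneg_pos)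
    then have "((\<lambda>\<xi>. G0 (\<xi> / (2 * \<tau>))) has_real_derivative g0 (x / (2 * \<tau>)) * (1 / (2 * \<tau>))) (at x)"
      by (intro DERIV_chain2[OF G0_deriv]) (use t in \<open>auto intro!: derivative_eq_intros\<close>)
    then show ?thesis
      by (simp add: has_real_derivative_iff_has_vector_derivative[symmetric] has_field_derivative_at_within)
  qed
  have "((\<lambda>x. g0 (x / (2 * \<tau>)) / (2 * \<tau>)) has_integral (G0 (m / (2 * \<tau>)) - G0 (0 / (2 * \<tau>)))) {0..m}"
    by (rule fundamental_theorem_of_calculus[OF m d])
  then have "((\<lambda>x. g0 (x / (2 * \<tau>)) / (2 * \<tau>)) has_integral G0 (m / (2 * \<tau>))) {0..m}"
    by (simp add: G0_0)
  then have "((\<lambda>\<xi>. tanh (\<xi> / (2 * \<tau>)) / \<xi>) has_integral G0 (m / (2 * \<tau>))) {0..m}"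
    by (rule has_integral_spike_finite[where S="{0}", rotated 2]) (use t in \<open>auto simp: g0_def\<close>)
  then show ?thesis by (rule integral_unique)
qed

lemma gapf_eq:
  assumes t: "\<tau> > 0" and m: "m \<ge> 0"
  shows "gapf xim m \<tau> = 2 * \<tau> * (ln (cosh (xim / (2 * \<tau>))) - ln (cosh (m / (2 * \<tau>)))) + m * G0 (m / (2 * \<tau>))"
  unfolding gapf_def int_eq[OF t m] by (simp add: ln_div)

lemma dA:
  assumes t: "\<tau> > 0"
  shows "((\<lambda>t. 2 * t * ln (cosh (c / (2 * t)))) has_real_derivative
           (2 * ln (cosh (c / (2 * \<tau>))) - 2 * (c / (2 * \<tau>)) * tanh (c / (2 * \<tau>)))) (at \<tau>)"
  using t by (auto intro!: derivative_eq_intros simp: tanh_def field_simps power2_eq_square)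

lemma dB:
  assumes t: "\<tau> > 0" and m: "\<mu> > 0"
  shows "((\<lambda>t. \<mu> * G0 (\<mu> / (2 * t))) has_real_derivative
           - (2 * (\<mu> / (2 * \<tau>)) * tanh (\<mu> / (2 * \<tau>)))) (at \<tau>)"
proof -
  have pos: "\<mu> / (2 * \<tau>) > -1" using t m by (smt (verit) divide_pos_pos)
  have "((\<lambda>t. G0 (\<mu> / (2 * t))) has_real_derivative g0 (\<mu> / (2 * \<tau>)) * (- \<mu> * 2 / (2 * \<tau>) ^ 2)) (at \<tau>)"
    by (intro DERIV_chain2[where g="\<lambda>t. \<mu> / (2 * t)" and x=\<tau>, OF G0_deriv[OF pos]]) (use t in \<open>auto intro!: derivative_eq_intros simp: power2_eq_square\<close>)
  then have "((\<lambda>t. \<mu> * G0 (\<mu> / (2 * t))) has_real_derivative \<mu> * (g0 (\<mu> / (2 * \<tau>)) * (- \<mu> * 2 / (2 * \<tau>) ^ 2))) (at \<tau>)"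
    by (rule DERIV_cmult)
  then show ?thesis
    by (rule DERIV_cong) (use t m in \<open>simp add: g0_def field_simps power2_eq_square\<close>)
qed

lemma dC:
  assumes t: "\<tau> > 0"
  shows "((\<lambda>m. 2 * \<tau> * ln (cosh (m / (2 * \<tau>)))) has_real_derivative tanh (\<mu> / (2 * \<tau>))) (at \<mu>)"
  using t by (auto intro!: derivative_eq_intros simp: tanh_def field_simps)

lemma dD:
  assumes t: "\<tau> > 0" and m: "\<mu> > 0"
  shows "((\<lambda>m. m * G0 (m / (2 * \<tau>))) has_real_derivative G0 (\<mu> / (2 * \<tau>)) + tanh (\<mu> / (2 * \<tau>))) (at \<mu>)"
proof -
  have pos: "\<mu> / (2 * \<tau>) > -1" using t m by (smt (verit) divide_pos_pos)
  have "((\<lambda>m. G0 (m / (2 * \<tau>))) has_real_derivative g0 (\<mu> / (2 * \<tau>)) * (1 / (2 * \<tau>))) (at \<mu>)"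
    by (intro DERIV_chain2[where g="\<lambda>m. m / (2 * \<tau>)" and x=\<mu>, OF G0_deriv[OF pos]]) (use t in \<open>auto intro!: derivative_eq_intros\<close>)
  from DERIV_mult[OF DERIV_ident this] show ?thesis
    by (rule DERIV_cong) (use t m in \<open>simp add: g0_def field_simps\<close>)
qed

lemma G0_pos: assumes "b > 0" shows "G0 b > 0"
proof -
  have "G0 0 < G0 b"
    by (rule DERIV_pos_imp_increasing[OF assms]) (use G0_deriv g0_pos in \<open>force\<close>)
  then show ?thesis by (simp add: G0_0)
qed

lemma G0_le: assumes "b \<ge> 0" shows "G0 b \<le> b"
proof -
  have "(\<lambda>y. y - G0 y) 0 \<le> (\<lambda>y. y - G0 y) b"
  proof (rule DERIV_nonneg_imp_nondecreasing[OF assms])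
    fix y :: real assume y: "0 \<le> y" "y \<le> b"
    have "((\<lambda>y. y - G0 y) has_real_derivative 1 - g0 y) (at y)"
      using y by (intro DERIV_diff DERIV_ident G0_deriv) auto
    then show "\<exists>d. ((\<lambda>y. y - G0 y) has_real_derivative d) (at y) \<and> d \<ge> 0"
      using g0_le1[of y] y by auto
  qed
  then show ?thesis by (simp add: G0_0)
qed

lemma G0_lower: assumes "x \<ge> 1" shows "G0 x \<ge> tanh 1 * ln x"
proof -
  have "(\<lambda>y. G0 y - tanh 1 * ln y) 1 \<le> (\<lambda>y. G0 y - tanh 1 * ln y) x"
  proof (rule DERIV_nonneg_imp_nondecreasing[OF assms])
    fix y :: real assume y: "1 \<le> y" "y \<le> x"
    have "((\<lambda>y. G0 y - tanh 1 * ln y) has_real_derivative g0 y - tanh 1 * (1 / y)) (at y)"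
      using y by (intro DERIV_diff DERIV_cmult G0_deriv DERIV_ln_divide) auto
    moreover have "g0 y - tanh 1 * (1 / y) \<ge> 0"
      using y by (auto simp: g0_def divide_right_mono)
    ultimately show "\<exists>d. ((\<lambda>y. G0 y - tanh 1 * ln y) has_real_derivative d) (at y) \<and> d \<ge> 0"
      by blast
  qed
  then show ?thesis using G0_pos[of 1] by simp
qed

lemma lim_aux1: "c > 0 \<Longrightarrow> (\<mu>::real) > 0 \<Longrightarrow> filterlim (\<lambda>t. c * ln (\<mu> / (2 * t))) at_top (at_right 0)"
  by real_asymp

lemma lim_aux2: "((\<lambda>t::real. K / (2 * t)) \<longlongrightarrow> 0) at_top"
  by real_asymp

lemma part1:
  assumes x: "xim > 0" and m: "0 < \<mu>" and t: "\<tau> > 0"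
  shows "\<exists>D. ((\<lambda>t. gapf xim \<mu> t) has_real_derivative D) (at \<tau>) \<and> D < 0"
proof -
  define a where "a = xim / (2 * \<tau>)"
  define b where "b = \<mu> / (2 * \<tau>)"
  have a: "a > 0" and b: "b > 0" using x m t by (auto simp: a_def b_def)
  let ?R = "\<lambda>t. 2 * t * ln (cosh (xim / (2 * t))) - 2 * t * ln (cosh (\<mu> / (2 * t))) + \<mu> * G0 (\<mu> / (2 * t))"
  have "(?R has_real_derivative ((2 * ln (cosh a) - 2 * a * tanh a) - (2 * ln (cosh b) - 2 * b * tanh b) + - (2 * b * tanh b))) (at \<tau>)"
    unfolding a_def b_def by (intro DERIV_add DERIV_diff dA dB t m)
  then have "((\<lambda>t. gapf xim \<mu> t) has_real_derivative ((2 * ln (cosh a) - 2 * a * tanh a) - (2 * ln (cosh b) - 2 * b * tanh b) + - (2 * b * tanh b))) (at \<tau>)"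
    by (rule has_field_derivative_transform_within_open[where S="{0<..}"])
       (use t m in \<open>auto simp: gapf_eq algebra_simps\<close>)
  moreover have "(2 * ln (cosh a) - 2 * a * tanh a) - (2 * ln (cosh b) - 2 * b * tanh b) + - (2 * b * tanh b) < 0"
    using phi_neg[OF a] lncosh_pos[OF b] by linarith
  ultimately show ?thesis by blast
qed

lemma part2:
  assumes x: "xim > 0" and m: "0 < \<mu>" and t: "\<tau> > 0"
  shows "\<exists>D. ((\<lambda>m. gapf xim m \<tau>) has_real_derivative D) (at \<mu>) \<and> D > 0"
proof -
  let ?R = "\<lambda>m. 2 * \<tau> * ln (cosh (xim / (2 * \<tau>))) - 2 * \<tau> * ln (cosh (m / (2 * \<tau>))) + m * G0 (m / (2 * \<tau>))"
  have "(?R has_real_derivative (0 - tanh (\<mu> / (2 * \<tau>)) + (G0 (\<mu> / (2 * \<tau>)) + tanh (\<mu> / (2 * \<tau>))))) (at \<mu>)"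
    by (intro DERIV_add DERIV_diff DERIV_const dC dD t m)
  then have "((\<lambda>m. gapf xim m \<tau>) has_real_derivative (0 - tanh (\<mu> / (2 * \<tau>)) + (G0 (\<mu> / (2 * \<tau>)) + tanh (\<mu> / (2 * \<tau>))))) (at \<mu>)"
    by (rule has_field_derivative_transform_within_open[where S="{0<..}"])
       (use t m in \<open>auto simp: gapf_eq algebra_simps\<close>)
  moreover have "0 - tanh (\<mu> / (2 * \<tau>)) + (G0 (\<mu> / (2 * \<tau>)) + tanh (\<mu> / (2 * \<tau>))) > 0"
    using G0_pos[of "\<mu> / (2 * \<tau>)"] t m by simp
  ultimately show ?thesis by blast
qed

lemma first_nonneg:
  fixes xim \<mu> t :: real
  assumes m: "0 < \<mu>" "\<mu> \<le> xim" and t: "t > 0"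
  shows "ln (cosh (xim / (2 * t))) - ln (cosh (\<mu> / (2 * t))) \<ge> 0"
proof -
  have "\<mu> / (2 * t) \<le> xim / (2 * t)" using m t by (simp add: divide_right_mono)
  then have "cosh (\<mu> / (2 * t)) \<le> cosh (xim / (2 * t))"
    using m t by (subst cosh_real_nonneg_le_iff) auto
  then show ?thesis by simp
qed

lemma part3:
  assumes x: "xim > 0" and m: "0 < \<mu>" "\<mu> \<le> xim"
  shows "filterlim (\<lambda>t. gapf xim \<mu> t) at_top (at_right 0)"
proof (rule filterlim_at_top_mono[OF lim_aux1[of "\<mu> * tanh 1" \<mu>]])
  show "0 < \<mu> * tanh 1" using m by simp
  show "0 < \<mu>" using m by simp
  have "eventually (\<lambda>t. t \<in> {0<..<\<mu>/2}) (at_right 0)"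
    using m by (intro eventually_at_rightI[of 0 "\<mu>/2"]) auto
  then show "eventually (\<lambda>t. \<mu> * tanh 1 * ln (\<mu> / (2 * t)) \<le> gapf xim \<mu> t) (at_right 0)"
  proof eventually_elim
    case (elim t)
    then have t: "t > 0" "t < \<mu>/2" by auto
    have ge1: "\<mu> / (2 * t) \<ge> 1" using t by (simp add: field_simps)
    have "\<mu> * tanh 1 * ln (\<mu> / (2 * t)) \<le> \<mu> * G0 (\<mu> / (2 * t))"
      using G0_lower[OF ge1] m by (simp add: mult.assoc mult_left_mono)
    also have "\<dots> \<le> gapf xim \<mu> t"
      using first_nonneg[OF m t(1)] t m by (simp add: gapf_eq)
    finally show ?case .
  qed
qed

lemma part4:
  assumes x: "xim > 0" and m: "0 < \<mu>" "\<mu> \<le> xim"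
  shows "((\<lambda>t. gapf xim \<mu> t) \<longlongrightarrow> 0) at_top"
proof (rule tendsto_sandwich[OF _ _ tendsto_const lim_aux2[of "xim^2 + \<mu>^2"]])
  show "eventually (\<lambda>t. 0 \<le> gapf xim \<mu> t) at_top"
    using eventually_gt_at_top[of 0]
  proof eventually_elim
    case (elim t)
    then show ?case using first_nonneg[OF m elim] G0_pos[of "\<mu> / (2 * t)"] m
      by (simp add: gapf_eq)
  qed
  show "eventually (\<lambda>t. gapf xim \<mu> t \<le> (xim^2 + \<mu>^2) / (2 * t)) at_top"
    using eventually_gt_at_top[of 0]
  proof eventually_elim
    case (elim t)
    define a where "a = xim / (2 * t)"
    define b where "b = \<mu> / (2 * t)"
    have a: "a > 0" and b: "b > 0" using x m elim by (auto simp: a_def b_def)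
    have "ln (cosh a) \<le> a * a" using phi_neg[OF a] tanh_le[of a] a
      by (smt (verit) mult_left_mono)
    moreover have "ln (cosh b) \<ge> 0" using lncosh_pos[OF b] by simp
    moreover have "G0 b \<le> b" using G0_le b by simp
    ultimately have "gapf xim \<mu> t \<le> 2 * t * (a * a) + \<mu> * b"
      using elim m unfolding gapf_eq[OF elim less_imp_le[OF m(1)]] a_def[symmetric] b_def[symmetric]
      by (smt (verit, best) mult_left_mono mult_pos_pos)
    also have "\<dots> = (xim^2 + \<mu>^2) / (2 * t)"
      using elim by (simp add: a_def b_def field_simps power2_eq_square)
    finally show ?case .
  qed
qed

lemma decr:
  assumes x: "xim > 0" and m: "0 < \<mu>" and st: "0 < s" "s < t"
  shows "gapf xim \<mu> t < gapf xim \<mu> s"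
  by (rule DERIV_neg_imp_decreasing[OF st(2)]) (use part1[OF x m] st in auto)

lemma part5:
  assumes x: "xim > 0" and m: "0 < \<mu>" "\<mu> \<le> xim" and c: "c > 0"
  shows "\<exists>!\<tau>. \<tau> > 0 \<and> c = gapf xim \<mu> \<tau>"
proof -
  have "eventually (\<lambda>t. c < gapf xim \<mu> t) (at_right 0)"
    using part3[OF x m] by (simp add: filterlim_at_top_dense)
  then obtain b where b: "b > 0" "\<And>y. y > 0 \<Longrightarrow> y < b \<Longrightarrow> c < gapf xim \<mu> y"
    unfolding eventually_at_right_field by auto
  define t1 where "t1 = b / 2"
  have t1: "t1 > 0" "c < gapf xim \<mu> t1" using b by (auto simp: t1_def)
  have "eventually (\<lambda>t. gapf xim \<mu> t < c) at_top"
    using order_tendstoD(2)[OF part4[OF x m] c] .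
  then obtain N where N: "\<And>n. n \<ge> N \<Longrightarrow> gapf xim \<mu> n < c"
    unfolding eventually_at_top_linorder by auto
  define t2 where "t2 = max N (t1 + 1)"
  have t2: "t1 \<le> t2" "gapf xim \<mu> t2 < c" using N by (auto simp: t2_def)
  have cont: "continuous_on {t1..t2} (\<lambda>t. gapf xim \<mu> t)"
  proof (intro continuous_at_imp_continuous_on ballI)
    fix y assume "y \<in> {t1..t2}"
    then have "y > 0" using t1 by auto
    then obtain D where "((\<lambda>t. gapf xim \<mu> t) has_real_derivative D) (at y)"
      using part1[OF x m(1)] by blast
    then show "isCont (\<lambda>t. gapf xim \<mu> t) y" by (rule DERIV_isCont)
  qed
  obtain t0 where t0: "t1 \<le> t0" "t0 \<le> t2" "gapf xim \<mu> t0 = c"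
    using IVT2'[of "\<lambda>t. gapf xim \<mu> t" t2 c t1] t1 t2 cont by force
  show ?thesis
  proof (rule ex1I[of _ t0])
    show "t0 > 0 \<and> c = gapf xim \<mu> t0" using t0 t1 by auto
  next
    fix y assume y: "y > 0 \<and> c = gapf xim \<mu> y"
    have "t0 > 0" using t0 t1 by auto
    show "y = t0"
    proof (rule linorder_cases[of y t0])
      assume "y < t0" then show ?thesis using decr[OF x m(1), of y t0] y t0 by auto
    next
      assume "t0 < y" then show ?thesis using decr[OF x m(1), of t0 y] y t0 \<open>t0 > 0\<close> by auto
    qed
  qed
qed

theorem mainTheorem8:
  fixes xim \<mu> :: real
  assumes "xim > 0" and "0 < \<mu>" and "\<mu> \<le> xim"
  shows "(\<forall>\<tau>>0. \<exists>D. ((\<lambda>t. gapf xim \<mu> t) has_real_derivative D) (at \<tau>) \<and> D < 0)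
       \<and> (\<forall>\<tau>>0. \<exists>D. ((\<lambda>m. gapf xim m \<tau>) has_real_derivative D) (at \<mu>) \<and> D > 0)
       \<and> filterlim (\<lambda>t. gapf xim \<mu> t) at_top (at_right 0)
       \<and> ((\<lambda>t. gapf xim \<mu> t) \<longlongrightarrow> 0) at_top
       \<and> (\<forall>lam>0. \<exists>!\<tau>. \<tau> > 0 \<and> xim / lam = gapf xim \<mu> \<tau>)"
  using part1[OF assms(1,2)] part2[OF assms(1,2)] part3[OF assms] part4[OF assms]
    part5[OF assms] assms(1) by auto

end
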